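(* Let $a\ge1$. There is a constant $c$ depending only on $d$ and $a$ such that for all $t>0$ and $x,z\in\mathbb{R}^d$ with $|z|\le [a\,h_0^{-1}(3/t)]\vee\frac{|x|}{2}$, $$\rho_t(x+z)\le c\,\rho_t(x).$$
   Context: $\nu_0\colon[0,\infty)\to[0,\infty]$ is non-increasing with $\int_{\mathbb{R}^d}(1\wedge|x|^2)\nu_0(|x|)dx<\infty$ and $\int_{\mathbb{R}^d}\nu_0(|x|)dx=\infty$. For $r>0$: $h_0(r)=\int_{\mathbb{R}^d}(1\wedge|x|^2/r^2)\nu_0(|x|)dx$, $K_0(r)=r^{-2}\int_{|x|<r}|x|^2\nu_0(|x|)dx$; $h_0$ is continuous and strictly decreasing from $\infty$ to $0$, with inverse $h_0^{-1}$. For $t>0$, $x\in\mathbb{R}^d$: $\rho_t(x)=[h_0^{-1}(1/t)]^{-d}\wedge\frac{tK_0(|x|)}{|x|^d}$ (equal to $[h_0^{-1}(1/t)]^{-d}$ at $x=0$). *)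

theory Defs
  imports "HOL-Analysis.Analysis"
begin

text \<open>The radial profile nu0 : [0,oo) -> [0,oo] is modelled as a function real => ennreal;
  only its values on [0,oo) matter. Space R^d is a euclidean_space type 'a, d = DIM('a).\<close>

definition levy_profile :: "('a::euclidean_space itself) \<Rightarrow> (real \<Rightarrow> ennreal) \<Rightarrow> bool" where
  "levy_profile _ \<nu> \<longleftrightarrow>
     (\<forall>s u. 0 \<le> s \<longrightarrow> s \<le> u \<longrightarrow> \<nu> u \<le> \<nu> s) \<and>
     (\<integral>\<^sup>+ x. ennreal (min 1 ((norm (x::'a))\<^sup>2)) * \<nu> (norm x) \<partial>lborel) < \<infinity> \<and>
     (\<integral>\<^sup>+ x. \<nu> (norm (x::'a)) \<partial>lborel) = \<infinity>"

definition h0 :: "('a::euclidean_space itself) \<Rightarrow> (real \<Rightarrow> ennreal) \<Rightarrow> real \<Rightarrow> real" where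
  "h0 _ \<nu> r = enn2real (\<integral>\<^sup>+ x. ennreal (min 1 ((norm (x::'a))\<^sup>2 / r\<^sup>2)) * \<nu> (norm x) \<partial>lborel)"

definition K0 :: "('a::euclidean_space itself) \<Rightarrow> (real \<Rightarrow> ennreal) \<Rightarrow> real \<Rightarrow> real" where
  "K0 _ \<nu> r = enn2real (\<integral>\<^sup>+ x. indicator {x. norm x < r} x * ennreal ((norm (x::'a))\<^sup>2) * \<nu> (norm x) \<partial>lborel) / r\<^sup>2"

text \<open>Inverse of the (continuous, strictly decreasing, onto (0,oo)) function h0 on (0,oo).\<close>
definition h0_inv :: "('a::euclidean_space itself) \<Rightarrow> (real \<Rightarrow> ennreal) \<Rightarrow> real \<Rightarrow> real" where
  "h0_inv T \<nu> s = (THE r. 0 < r \<and> h0 T \<nu> r = s)"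

definition rho :: "(real \<Rightarrow> ennreal) \<Rightarrow> real \<Rightarrow> 'a::euclidean_space \<Rightarrow> real" where
  "rho \<nu> t x =
     (if x = 0 then (1 / h0_inv TYPE('a) \<nu> (1/t)) ^ DIM('a)
      else min ((1 / h0_inv TYPE('a) \<nu> (1/t)) ^ DIM('a))
               (t * K0 TYPE('a) \<nu> (norm x) / (norm x) ^ DIM('a)))"

end

theory Submission
  imports Defs
begin


definition antit :: "(real \<Rightarrow> ennreal) \<Rightarrow> bool" where
  "antit \<nu> \<longleftrightarrow> (\<forall>s u. 0 \<le> s \<longrightarrow> s \<le> u \<longrightarrow> \<nu> u \<le> \<nu> s)"

lemma meas_nu:
  assumes "antit \<nu>"
  shows "(\<lambda>x::'a::euclidean_space. \<nu> (norm x)) \<in> borel_measurable borel"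
proof (rule borel_measurableI_greater)
  fix c :: ennreal
  let ?S = "{u::real. 0 \<le> u \<and> c < \<nu> u}"
  have "is_interval ?S"
    unfolding is_interval_1
  proof (intro ballI allI impI, elim conjE)
    fix u v w assume "u \<in> ?S" "v \<in> ?S" "u \<le> w" "w \<le> v"
    then show "w \<in> ?S" using assms unfolding antit_def
      by (metis (mono_tags, lifting) dual_order.trans mem_Collect_eq order_less_le_trans)
  qed
  hence "?S \<in> sets borel" by (rule real_interval_borel_measurable)
  hence "norm -` ?S \<in> sets (borel :: 'a measure)"
    using borel_measurable_norm measurable_sets_borel by blast
  moreover have "{x::'a \<in> space borel. c < \<nu> (norm x)} = norm -` ?S" by auto
  ultimately show "{x::'a \<in> space borel. c < \<nu> (norm x)} \<in> sets borel" by simp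
qed

lemma nn_scale:
  fixes f :: "'a::euclidean_space \<Rightarrow> ennreal"
  assumes [measurable]: "f \<in> borel_measurable borel" and c: "c \<noteq> 0"
  shows "(\<integral>\<^sup>+x. f x \<partial>lborel) = ennreal (\<bar>c\<bar>^DIM('a)) * (\<integral>\<^sup>+x. f (c *\<^sub>R x) \<partial>lborel)"
  by (subst lborel_affine[OF c, of 0])
     (simp add: nn_integral_density nn_integral_distr nn_integral_cmult)

definition MM :: "'a::euclidean_space itself \<Rightarrow> (real \<Rightarrow> ennreal) \<Rightarrow> real \<Rightarrow> ennreal" where
  "MM T \<nu> r = (\<integral>\<^sup>+ x. indicator {x. norm x < r} x * ennreal ((norm (x::'a))\<^sup>2) * \<nu> (norm x) \<partial>lborel)"

definition HH :: "'a::euclidean_space itself \<Rightarrow> (real \<Rightarrow> ennreal) \<Rightarrow> real \<Rightarrow> ennreal" where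
  "HH T \<nu> r = (\<integral>\<^sup>+ x. ennreal (min 1 ((norm (x::'a::euclidean_space))\<^sup>2 / r\<^sup>2)) * \<nu> (norm x) \<partial>lborel)"

lemma levy_antit: "levy_profile T \<nu> \<Longrightarrow> antit \<nu>"
  unfolding levy_profile_def antit_def by blast

lemma MM_mono:
  assumes "r \<le> s"
  shows "MM T \<nu> r \<le> MM T \<nu> s"
  unfolding MM_def
  by (intro nn_integral_mono mult_right_mono) (use assms in \<open>auto simp: indicator_def\<close>)

lemma MM_fin:
  assumes "levy_profile TYPE('a::euclidean_space) \<nu>"
  shows "MM TYPE('a) \<nu> r < \<infinity>"
proof -
  have "MM TYPE('a) \<nu> r \<le> (\<integral>\<^sup>+ x. ennreal (max 1 (r\<^sup>2)) * (ennreal (min 1 ((norm (x::'a))\<^sup>2)) * \<nu> (norm x)) \<partial>lborel)"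
    unfolding MM_def
  proof (intro nn_integral_mono)
    fix x :: 'a
    have "indicator {x. norm x < r} x * ennreal ((norm x)\<^sup>2) \<le> ennreal (max 1 (r\<^sup>2)) * ennreal (min 1 ((norm x)\<^sup>2))"
    proof (cases "norm x < r")
      case True
      have "(norm x)\<^sup>2 \<le> max 1 (r\<^sup>2) * min 1 ((norm x)\<^sup>2)"
      proof (cases "norm x \<le> 1")
        case True
        then have "min 1 ((norm x)\<^sup>2) = (norm x)\<^sup>2" by (simp add: power_le_one)
        moreover have "(norm x)\<^sup>2 \<le> max 1 (r\<^sup>2) * (norm x)\<^sup>2"
          by (intro mult_le_cancel_right1[THEN iffD2] disjI1) auto
        ultimately show ?thesis by simp
      next
        case False
        then have "(norm x)\<^sup>2 \<le> r\<^sup>2" using \<open>norm x < r\<close>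
          by (intro power_mono) auto
        moreover have "\<not> (norm x)\<^sup>2 \<le> 1" using False
          by (metis abs_norm_cancel abs_square_le_1)
        ultimately show ?thesis by auto
      qed
      then show ?thesis using True by (simp add: ennreal_mult'[symmetric] ennreal_leI)
    qed simp
    then show "indicator {x. norm x < r} x * ennreal ((norm x)\<^sup>2) * \<nu> (norm x)
       \<le> ennreal (max 1 (r\<^sup>2)) * (ennreal (min 1 ((norm x)\<^sup>2)) * \<nu> (norm x))"
      by (metis mult.assoc mult_right_mono zero_le)
  qed
  also have "\<dots> = ennreal (max 1 (r\<^sup>2)) * (\<integral>\<^sup>+ x. ennreal (min 1 ((norm (x::'a))\<^sup>2)) * \<nu> (norm x) \<partial>lborel)"
  proof -
    note [measurable] = meas_nu[OF levy_antit[OF assms]]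
    have "(\<lambda>x::'a. ennreal (min 1 ((norm x)\<^sup>2))) \<in> borel_measurable borel" by measurable
    then have "(\<lambda>x::'a. ennreal (min 1 ((norm x)\<^sup>2)) * \<nu> (norm x)) \<in> borel_measurable borel"
      by (intro borel_measurable_times_ennreal meas_nu[OF levy_antit[OF assms]])
    then show ?thesis by (intro nn_integral_cmult) simp
  qed
  also have "\<dots> < \<infinity>" using assms unfolding levy_profile_def
    by (simp add: ennreal_mult_less_top)
  finally show ?thesis .
qed

lemma MM_scale:
  assumes "antit \<nu>" "\<mu> \<ge> 1"
  shows "MM TYPE('a::euclidean_space) \<nu> (\<mu> * r) \<le> ennreal (\<mu> ^ (DIM('a) + 2)) * MM TYPE('a) \<nu> r"
proof -
  note [measurable] = meas_nu[OF assms(1)]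
  have "MM TYPE('a) \<nu> (\<mu> * r) = ennreal (\<bar>\<mu>\<bar>^DIM('a)) * (\<integral>\<^sup>+x. indicator {x. norm x < \<mu> * r} (\<mu> *\<^sub>R x) * ennreal ((norm (\<mu> *\<^sub>R (x::'a)))\<^sup>2) * \<nu> (norm (\<mu> *\<^sub>R x)) \<partial>lborel)"
    unfolding MM_def using assms by (intro nn_scale) auto
  also have "\<dots> \<le> ennreal (\<mu>^DIM('a)) * (\<integral>\<^sup>+x. ennreal (\<mu>\<^sup>2) * (indicator {x. norm x < r} x * ennreal ((norm (x::'a))\<^sup>2) * \<nu> (norm x)) \<partial>lborel)"
  proof (rule mult_mono[OF _ nn_integral_mono])
    fix x :: 'a
    have n: "norm (\<mu> *\<^sub>R x) = \<mu> * norm x" using assms by simp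
    have i: "indicator {x. norm x < \<mu> * r} (\<mu> *\<^sub>R x) = (indicator {x. norm x < r} x :: ennreal)"
      using assms by (simp add: n indicator_def)
    have v: "\<nu> (\<mu> * norm x) \<le> \<nu> (norm x)"
      proof -
      have "norm x \<le> \<mu> * norm x" using assms(2)
        by (simp add: mult_le_cancel_right1)
      then show ?thesis using assms(1) unfolding antit_def by simp
    qed
    have "ennreal ((\<mu> * norm x)\<^sup>2) = ennreal (\<mu>\<^sup>2) * ennreal ((norm x)\<^sup>2)"
      by (simp add: ennreal_mult'[symmetric] power_mult_distrib)
    then show "indicator {x. norm x < \<mu> * r} (\<mu> *\<^sub>R x) * ennreal ((norm (\<mu> *\<^sub>R x))\<^sup>2) * \<nu> (norm (\<mu> *\<^sub>R x))
        \<le> ennreal (\<mu>\<^sup>2) * (indicator {x. norm x < r} x * ennreal ((norm x)\<^sup>2) * \<nu> (norm x))"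
      using v unfolding i n by (simp add: mult_right_mono mult_ac)
  qed (use assms in auto)
  also have "\<dots> = ennreal (\<mu>^DIM('a)) * (ennreal (\<mu>\<^sup>2) * MM TYPE('a) \<nu> r)"
    unfolding MM_def by (subst nn_integral_cmult) auto
  also have "\<dots> = ennreal (\<mu> ^ (DIM('a) + 2)) * MM TYPE('a) \<nu> r"
  proof -
    have "ennreal (\<mu> ^ (DIM('a) + 2)) = ennreal (\<mu>^DIM('a)) * ennreal (\<mu>\<^sup>2)"
      using assms by (simp add: ennreal_mult'[symmetric] power_add power2_eq_square)
    then show ?thesis by (simp add: mult.assoc)
  qed
  finally show ?thesis .
qed


definition kap :: "nat \<Rightarrow> real" where
  "kap d = unit_ball_vol (real d) * (1 - (1/2)^d) / 4"

lemma kap_pos: "d > 0 \<Longrightarrow> kap d > 0"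
  unfolding kap_def by (simp add: power_less_one_iff)

lemma MM_lower:
  assumes "antit \<nu>" "s > 0"
  shows "\<nu> s * ennreal (kap DIM('a) * s ^ (DIM('a) + 2)) \<le> MM TYPE('a::euclidean_space) \<nu> s"
proof -
  note [measurable] = meas_nu[OF assms(1)]
  let ?S = "ball (0::'a) s - ball 0 (s/2)"
  let ?w = "unit_ball_vol (real DIM('a))"
  have "(\<integral>\<^sup>+x. (ennreal (s\<^sup>2/4) * \<nu> s) * indicator ?S x \<partial>lborel) \<le> MM TYPE('a) \<nu> s"
    unfolding MM_def
  proof (rule nn_integral_mono)
    fix x :: 'a
    show "ennreal (s\<^sup>2/4) * \<nu> s * indicator ?S x \<le> indicator {x. norm x < s} x * ennreal ((norm x)\<^sup>2) * \<nu> (norm x)"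
    proof (cases "x \<in> ?S")
      case True
      then have h: "norm x < s" "s/2 \<le> norm x" by auto
      have "s\<^sup>2/4 \<le> (norm x)\<^sup>2"
      proof -
        have "(s/2)^2 \<le> (norm x)^2" using h assms by (intro power_mono) auto
        then show ?thesis by (simp add: power_divide)
      qed
      moreover have "\<nu> s \<le> \<nu> (norm x)" using assms(1) h unfolding antit_def by simp
      ultimately show ?thesis using True h
        by (simp add: mult_mono ennreal_leI mult.commute)
    qed simp
  qed
  moreover have "(\<integral>\<^sup>+x. (ennreal (s\<^sup>2/4) * \<nu> s) * indicator ?S x \<partial>lborel) = (ennreal (s\<^sup>2/4) * \<nu> s) * emeasure lborel ?S"
    by (rule nn_integral_cmult_indicator) simp
  moreover have "emeasure lborel ?S = ennreal (?w * s ^ DIM('a) * (1 - (1/2)^DIM('a)))"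
  proof -
    have "emeasure lborel ?S = emeasure lborel (ball (0::'a) s) - emeasure lborel (ball (0::'a) (s/2))"
      using emeasure_lborel_ball_finite[of "0::'a" "s/2"] assms
      by (intro emeasure_Diff) auto
    also have "\<dots> = ennreal (?w * s ^ DIM('a)) - ennreal (?w * (s/2) ^ DIM('a))"
      using assms by (simp add: emeasure_ball)
    also have "\<dots> = ennreal (?w * s ^ DIM('a) - ?w * (s/2) ^ DIM('a))"
      using assms by (intro ennreal_minus) auto
    also have "?w * s ^ DIM('a) - ?w * (s/2) ^ DIM('a) = ?w * s ^ DIM('a) * (1 - (1/2)^DIM('a))"
      by (simp add: power_divide field_simps)
    finally show ?thesis .
  qed
  ultimately have "\<nu> s * (ennreal (s\<^sup>2/4) * ennreal (?w * s ^ DIM('a) * (1 - (1/2)^DIM('a)))) \<le> MM TYPE('a) \<nu> s"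
    by (simp add: mult_ac)
  moreover have "ennreal (s\<^sup>2/4) * ennreal (?w * s ^ DIM('a) * (1 - (1/2)^DIM('a))) = ennreal (kap DIM('a) * s ^ (DIM('a) + 2))"
    using assms unfolding kap_def
    by (subst ennreal_mult'[symmetric]) (auto simp: power_add power2_eq_square field_simps)
  ultimately show ?thesis by simp
qed


definition mm :: "'a::euclidean_space itself \<Rightarrow> (real \<Rightarrow> ennreal) \<Rightarrow> real \<Rightarrow> real" where
  "mm T \<nu> r = enn2real (MM T \<nu> r)"

lemma MM_eq: "levy_profile TYPE('a::euclidean_space) \<nu> \<Longrightarrow> MM TYPE('a) \<nu> r = ennreal (mm TYPE('a) \<nu> r)"
  unfolding mm_def using MM_fin[where 'a='a, of \<nu> r] by (simp add: ennreal_enn2real_if)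

lemma mm_nonneg: "mm T \<nu> r \<ge> 0"
  unfolding mm_def by simp

lemma mm_mono:
  assumes "levy_profile TYPE('a::euclidean_space) \<nu>" "r \<le> s"
  shows "mm TYPE('a) \<nu> r \<le> mm TYPE('a) \<nu> s"
  using MM_mono[OF assms(2), of "TYPE('a)" \<nu>] MM_eq[OF assms(1)] mm_nonneg[of "TYPE('a)" \<nu> s]
  by (simp add: ennreal_le_iff)

lemma mm_scale:
  assumes "levy_profile TYPE('a::euclidean_space) \<nu>" "\<mu> \<ge> 1"
  shows "mm TYPE('a) \<nu> (\<mu> * r) \<le> \<mu> ^ (DIM('a) + 2) * mm TYPE('a) \<nu> r"
proof -
  have "ennreal (mm TYPE('a) \<nu> (\<mu> * r)) \<le> ennreal (\<mu> ^ (DIM('a) + 2) * mm TYPE('a) \<nu> r)"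
    using MM_scale[where 'a='a, OF levy_antit[OF assms(1)] assms(2), of r] MM_eq[OF assms(1)] assms(2)
    by (simp add: ennreal_mult')
  moreover have "0 \<le> \<mu> ^ (DIM('a) + 2) * mm TYPE('a) \<nu> r" using assms(2) mm_nonneg[of "TYPE('a)" \<nu> r] by simp
  ultimately show ?thesis using ennreal_le_iff by blast
qed

lemma nu_le:
  assumes "levy_profile TYPE('a::euclidean_space) \<nu>" "s > 0"
  shows "\<nu> s \<le> ennreal (mm TYPE('a) \<nu> s / (kap DIM('a) * s ^ (DIM('a) + 2)))"
proof -
  let ?k = "kap DIM('a) * s ^ (DIM('a) + 2)"
  have k: "?k > 0" using assms(2) kap_pos[of "DIM('a)"] by simp
  have l: "\<nu> s * ennreal ?k \<le> ennreal (mm TYPE('a) \<nu> s)"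
    using MM_lower[where 'a='a, OF levy_antit[OF assms(1)] assms(2)] MM_eq[OF assms(1)] by simp
  have "\<nu> s \<noteq> \<infinity>"
  proof
    assume "\<nu> s = \<infinity>"
    then have "\<nu> s * ennreal ?k = \<infinity>" 
    proof -
      have "ennreal ?k \<noteq> 0" using k ennreal_eq_0_iff by (metis not_le)
      then show ?thesis using \<open>\<nu> s = \<infinity>\<close> by (simp add: ennreal_mult_eq_top_iff)
    qed
    then show False using l by (simp add: top_unique)
  qed
  then obtain q where q: "\<nu> s = ennreal q" "q \<ge> 0" by (cases "\<nu> s") auto
  have "ennreal (q * ?k) \<le> ennreal (mm TYPE('a) \<nu> s)" using l q k by (simp add: ennreal_mult')
  then have "q * ?k \<le> mm TYPE('a) \<nu> s" using mm_nonneg[of "TYPE('a)" \<nu> s] ennreal_le_iff by blast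
  then have "q \<le> mm TYPE('a) \<nu> s / ?k" using k by (simp add: field_simps)
  then show ?thesis using q by (simp add: ennreal_leI)
qed

lemma mm_compare:
  assumes "levy_profile TYPE('a::euclidean_space) \<nu>" "lam \<ge> 1" "\<rho> > 0" "\<rho>' \<ge> \<rho> / lam"
  shows "mm TYPE('a) \<nu> \<rho>' / \<rho>' ^ (DIM('a) + 2) \<le> lam ^ (DIM('a) + 2) * mm TYPE('a) \<nu> \<rho> / \<rho> ^ (DIM('a) + 2)"
proof -
  let ?D = "DIM('a) + 2"
  have lp: "lam > 0" using assms by simp
  have rp: "\<rho>' > 0" using assms lp by (smt (verit) divide_pos_pos)
  show ?thesis
  proof (cases "\<rho>' \<le> \<rho>")
    case True
    have "mm TYPE('a) \<nu> \<rho>' \<le> mm TYPE('a) \<nu> \<rho>" by (rule mm_mono[OF assms(1) True])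
    moreover have "\<rho> \<le> lam * \<rho>'" using assms lp by (simp add: field_simps)
    then have "\<rho> ^ ?D \<le> (lam * \<rho>') ^ ?D" using assms by (intro power_mono) auto
    then have "1 / \<rho>' ^ ?D \<le> lam ^ ?D / \<rho> ^ ?D" using assms rp lp
      by (simp add: field_simps power_mult_distrib)
    ultimately have "mm TYPE('a) \<nu> \<rho>' * (1 / \<rho>' ^ ?D) \<le> mm TYPE('a) \<nu> \<rho> * (lam ^ ?D / \<rho> ^ ?D)"
      using mm_nonneg rp by (intro mult_mono) auto
    then show ?thesis by (simp add: field_simps)
  next
    case False
    let ?mu = "\<rho>' / \<rho>"
    have mu: "?mu \<ge> 1" using False assms by simp
    have "mm TYPE('a) \<nu> (?mu * \<rho>) \<le> ?mu ^ ?D * mm TYPE('a) \<nu> \<rho>" by (rule mm_scale[OF assms(1) mu])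
    then have "mm TYPE('a) \<nu> \<rho>' \<le> \<rho>' ^ ?D / \<rho> ^ ?D * mm TYPE('a) \<nu> \<rho>"
      using assms by (simp add: power_divide)
    then have "mm TYPE('a) \<nu> \<rho>' / \<rho>' ^ ?D \<le> mm TYPE('a) \<nu> \<rho> / \<rho> ^ ?D"
      using rp assms by (simp add: field_simps)
    also have "\<dots> \<le> lam ^ ?D * mm TYPE('a) \<nu> \<rho> / \<rho> ^ ?D"
    proof -
      have "1 \<le> lam ^ ?D" using assms by (intro one_le_power) auto
      then have "mm TYPE('a) \<nu> \<rho> \<le> lam ^ ?D * mm TYPE('a) \<nu> \<rho>"
        using mm_nonneg[of "TYPE('a)" \<nu> \<rho>] by (simp add: mult_le_cancel_right1)
      then show ?thesis using assms by (intro divide_right_mono) auto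
    qed
    finally show ?thesis .
  qed
qed


lemma meas_prod:
  assumes "antit \<nu>" "g \<in> borel_measurable borel"
  shows "(\<lambda>x::'a::euclidean_space. g x * \<nu> (norm x)) \<in> borel_measurable lborel"
  using borel_measurable_times_ennreal[OF assms(2) meas_nu[OF assms(1)]] by simp

lemma h0_HH: "h0 T \<nu> r = enn2real (HH T \<nu> r)"
  unfolding h0_def HH_def ..

lemma HH_fin:
  assumes "levy_profile TYPE('a::euclidean_space) \<nu>" "r > 0"
  shows "HH TYPE('a) \<nu> r < \<infinity>"
proof -
  have "HH TYPE('a) \<nu> r \<le> (\<integral>\<^sup>+ x. ennreal (max 1 (1/r\<^sup>2)) * (ennreal (min 1 ((norm (x::'a))\<^sup>2)) * \<nu> (norm x)) \<partial>lborel)"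
    unfolding HH_def
  proof (intro nn_integral_mono)
    fix x :: 'a
    have "min 1 ((norm x)\<^sup>2 / r\<^sup>2) \<le> max 1 (1/r\<^sup>2) * min 1 ((norm x)\<^sup>2)"
    proof (cases "(norm x)\<^sup>2 \<le> 1")
      case True
      have "min 1 ((norm x)\<^sup>2 / r\<^sup>2) \<le> (1/r\<^sup>2) * (norm x)\<^sup>2" by simp
      also have "\<dots> \<le> max 1 (1/r\<^sup>2) * (norm x)\<^sup>2" by (intro mult_right_mono) auto
      finally show ?thesis using True by simp
    next
      case False
      then show ?thesis by simp
    qed
    then have "ennreal (min 1 ((norm x)\<^sup>2 / r\<^sup>2)) \<le> ennreal (max 1 (1/r\<^sup>2)) * ennreal (min 1 ((norm x)\<^sup>2))"
      by (simp add: ennreal_mult'[symmetric] ennreal_leI)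
    then show "ennreal (min 1 ((norm x)\<^sup>2 / r\<^sup>2)) * \<nu> (norm x)
       \<le> ennreal (max 1 (1/r\<^sup>2)) * (ennreal (min 1 ((norm x)\<^sup>2)) * \<nu> (norm x))"
      by (metis mult.assoc mult_right_mono zero_le)
  qed
  also have "\<dots> = ennreal (max 1 (1/r\<^sup>2)) * (\<integral>\<^sup>+ x. ennreal (min 1 ((norm (x::'a))\<^sup>2)) * \<nu> (norm x) \<partial>lborel)"
  proof -
    have "(\<lambda>x::'a. ennreal (min 1 ((norm x)\<^sup>2))) \<in> borel_measurable borel" by measurable
    then show ?thesis by (intro nn_integral_cmult meas_prod levy_antit[OF assms(1)])
  qed
  also have "\<dots> < \<infinity>" using assms unfolding levy_profile_def
    by (simp add: ennreal_mult_less_top)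
  finally show ?thesis .
qed

lemma HH_eq: "levy_profile TYPE('a::euclidean_space) \<nu> \<Longrightarrow> r > 0 \<Longrightarrow> HH TYPE('a) \<nu> r = ennreal (h0 TYPE('a) \<nu> r)"
  unfolding h0_HH using HH_fin[where 'a='a, of \<nu> r] by (simp add: ennreal_enn2real_if)

lemma h0_nonneg: "h0 T \<nu> r \<ge> 0"
  unfolding h0_HH by simp

lemma h0_anti:
  assumes "levy_profile TYPE('a::euclidean_space) \<nu>" "0 < r" "r \<le> r'"
  shows "h0 TYPE('a) \<nu> r' \<le> h0 TYPE('a) \<nu> r"
proof -
  have "HH TYPE('a) \<nu> r' \<le> HH TYPE('a) \<nu> r"
    unfolding HH_def
  proof (intro nn_integral_mono mult_right_mono ennreal_leI)
    fix x :: 'a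
    have "r\<^sup>2 \<le> r'\<^sup>2" using assms by (intro power_mono) auto
    then have "(norm x)\<^sup>2 / r'\<^sup>2 \<le> (norm x)\<^sup>2 / r\<^sup>2" using assms by (intro divide_left_mono) auto
    then show "min 1 ((norm x)\<^sup>2 / r'\<^sup>2) \<le> min 1 ((norm x)\<^sup>2 / r\<^sup>2)" by simp
  qed simp
  then show ?thesis using HH_eq[OF assms(1)] assms h0_nonneg[of "TYPE('a)" \<nu> r] ennreal_le_iff by auto
qed

lemma h0_sq:
  assumes "levy_profile TYPE('a::euclidean_space) \<nu>" "0 < r" "r \<le> r'"
  shows "r\<^sup>2 * h0 TYPE('a) \<nu> r \<le> r'\<^sup>2 * h0 TYPE('a) \<nu> r'"
proof -
  note an = levy_antit[OF assms(1)]
  have r'p: "r' > 0" using assms by simp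
  have e: "ennreal (q\<^sup>2) * HH TYPE('a) \<nu> q = (\<integral>\<^sup>+ x. ennreal (min (q\<^sup>2) ((norm (x::'a))\<^sup>2)) * \<nu> (norm x) \<partial>lborel)"
    if "q > 0" for q
  proof -
    have "(\<lambda>x::'a. ennreal (min 1 ((norm x)\<^sup>2 / q\<^sup>2))) \<in> borel_measurable borel" by measurable
    then have "ennreal (q\<^sup>2) * HH TYPE('a) \<nu> q = (\<integral>\<^sup>+ x. ennreal (q\<^sup>2) * (ennreal (min 1 ((norm (x::'a))\<^sup>2 / q\<^sup>2)) * \<nu> (norm x)) \<partial>lborel)"
      unfolding HH_def by (intro nn_integral_cmult[symmetric] meas_prod an)
    also have "\<dots> = (\<integral>\<^sup>+ x. ennreal (min (q\<^sup>2) ((norm (x::'a))\<^sup>2)) * \<nu> (norm x) \<partial>lborel)"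
    proof (intro nn_integral_cong)
      fix x :: 'a
      have "q\<^sup>2 * min 1 ((norm x)\<^sup>2 / q\<^sup>2) = min (q\<^sup>2) ((norm x)\<^sup>2)"
        using that by (simp add: min_mult_distrib_left)
      then show "ennreal (q\<^sup>2) * (ennreal (min 1 ((norm x)\<^sup>2 / q\<^sup>2)) * \<nu> (norm x)) = ennreal (min (q\<^sup>2) ((norm x)\<^sup>2)) * \<nu> (norm x)"
        by (simp add: ennreal_mult'[symmetric] mult.assoc[symmetric])
    qed
    finally show ?thesis .
  qed
  have "ennreal (r\<^sup>2) * HH TYPE('a) \<nu> r \<le> ennreal (r'\<^sup>2) * HH TYPE('a) \<nu> r'"
    unfolding e[OF assms(2)] e[OF r'p]
  proof (intro nn_integral_mono mult_right_mono ennreal_leI)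
    fix x :: 'a
    have "r\<^sup>2 \<le> r'\<^sup>2" using assms by (intro power_mono) auto
    then show "min (r\<^sup>2) ((norm x)\<^sup>2) \<le> min (r'\<^sup>2) ((norm x)\<^sup>2)" by simp
  qed simp
  then have "ennreal (r\<^sup>2 * h0 TYPE('a) \<nu> r) \<le> ennreal (r'\<^sup>2 * h0 TYPE('a) \<nu> r')"
    using HH_eq[OF assms(1)] assms r'p by (simp add: ennreal_mult')
  then show ?thesis using h0_nonneg[of "TYPE('a)" \<nu> r'] ennreal_le_iff
    by (metis mult_nonneg_nonneg zero_le_power2)
qed


lemma meas_MMint:
  assumes "antit \<nu>"
  shows "(\<lambda>x::'a::euclidean_space. indicator {x. norm x < r} x * ennreal ((norm x)\<^sup>2) * \<nu> (norm x)) \<in> borel_measurable lborel"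
proof -
  have "(\<lambda>x::'a. indicator {x. norm x < r} x * ennreal ((norm x)\<^sup>2)) \<in> borel_measurable borel" by measurable
  then show ?thesis by (rule meas_prod[OF assms])
qed

lemma meas_HHint:
  assumes "antit \<nu>"
  shows "(\<lambda>x::'a::euclidean_space. ennreal (min 1 ((norm x)\<^sup>2 / r\<^sup>2)) * \<nu> (norm x)) \<in> borel_measurable lborel"
proof -
  have "(\<lambda>x::'a. ennreal (min 1 ((norm x)\<^sup>2 / r\<^sup>2))) \<in> borel_measurable borel" by measurable
  then show ?thesis by (rule meas_prod[OF assms])
qed

lemma h0_strict:
  assumes "levy_profile TYPE('a::euclidean_space) \<nu>" "0 < s" "s < s'"
  shows "h0 TYPE('a) \<nu> s' + (1/s\<^sup>2 - 1/s'\<^sup>2) * mm TYPE('a) \<nu> s \<le> h0 TYPE('a) \<nu> s"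
proof -
  note an = levy_antit[OF assms(1)]
  have s'p: "s' > 0" using assms by simp
  have ss: "s\<^sup>2 < s'\<^sup>2" using assms by (intro power_strict_mono) auto
  then have cpos: "1/s\<^sup>2 - 1/s'\<^sup>2 \<ge> 0" using assms by (simp add: field_simps)
  have "HH TYPE('a) \<nu> s' + ennreal (1/s\<^sup>2 - 1/s'\<^sup>2) * MM TYPE('a) \<nu> s
      = (\<integral>\<^sup>+ x. ennreal (min 1 ((norm (x::'a))\<^sup>2 / s'\<^sup>2)) * \<nu> (norm x) + ennreal (1/s\<^sup>2 - 1/s'\<^sup>2) * (indicator {x. norm x < s} x * ennreal ((norm x)\<^sup>2) * \<nu> (norm x)) \<partial>lborel)"
  proof -
    have m1: "(\<lambda>x::'a. ennreal (min 1 ((norm x)\<^sup>2 / s'\<^sup>2)) * \<nu> (norm x)) \<in> borel_measurable borel"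
      using meas_HHint[OF an, of s'] by simp
    have m2: "(\<lambda>x::'a. indicator {x. norm x < s} x * ennreal ((norm x)\<^sup>2) * \<nu> (norm x)) \<in> borel_measurable borel"
      using meas_MMint[OF an, of s] by simp
    have m3: "(\<lambda>x::'a. ennreal (1/s\<^sup>2 - 1/s'\<^sup>2) * (indicator {x. norm x < s} x * ennreal ((norm x)\<^sup>2) * \<nu> (norm x))) \<in> borel_measurable borel"
      by (rule borel_measurable_times_ennreal[OF borel_measurable_const m2])
    show ?thesis
      by (subst nn_integral_add) (use m1 m3 m2 in \<open>auto simp: nn_integral_cmult HH_def MM_def\<close>)
  qed
  also have "\<dots> \<le> HH TYPE('a) \<nu> s"
    unfolding HH_def
  proof (intro nn_integral_mono)
    fix x :: 'a
    show "ennreal (min 1 ((norm x)\<^sup>2 / s'\<^sup>2)) * \<nu> (norm x) + ennreal (1/s\<^sup>2 - 1/s'\<^sup>2) * (indicator {x. norm x < s} x * ennreal ((norm x)\<^sup>2) * \<nu> (norm x))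
        \<le> ennreal (min 1 ((norm x)\<^sup>2 / s\<^sup>2)) * \<nu> (norm x)"
    proof (cases "norm x < s")
      case True
      have n2: "(norm x)\<^sup>2 < s\<^sup>2" using True by (intro power_strict_mono) auto
      then have a: "min 1 ((norm x)\<^sup>2 / s\<^sup>2) = (norm x)\<^sup>2 / s\<^sup>2" using assms by simp
      have b: "min 1 ((norm x)\<^sup>2 / s'\<^sup>2) = (norm x)\<^sup>2 / s'\<^sup>2" using n2 ss s'p by (simp add: min_def divide_le_eq_1 del: power2_less_eq_zero_iff zero_le_power2 power_mono_iff)
      have "(norm x)\<^sup>2 / s'\<^sup>2 + (1/s\<^sup>2 - 1/s'\<^sup>2) * (norm x)\<^sup>2 = (norm x)\<^sup>2 / s\<^sup>2"
        by (simp add: field_simps)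
      then have "ennreal ((norm x)\<^sup>2 / s'\<^sup>2) + ennreal (1/s\<^sup>2 - 1/s'\<^sup>2) * ennreal ((norm x)\<^sup>2) = ennreal ((norm x)\<^sup>2 / s\<^sup>2)"
        using cpos by (simp add: ennreal_mult'[symmetric] ennreal_plus[symmetric] del: ennreal_plus)
      then show ?thesis using True unfolding a b
        by (metis (no_types, lifting) distrib_right indicator_simps(1) mem_Collect_eq mult.assoc mult_1 order_refl)
    next
      case False
      have "s\<^sup>2 \<le> (norm x)\<^sup>2" using False assms by (intro power_mono) auto
      then have "min 1 ((norm x)\<^sup>2 / s\<^sup>2) = 1" using assms by simp
      moreover have "ennreal (min 1 ((norm x)\<^sup>2 / s'\<^sup>2)) \<le> 1" by (simp add: ennreal_leI)
      then have "ennreal (min 1 ((norm x)\<^sup>2 / s'\<^sup>2)) * \<nu> (norm x) \<le> 1 * \<nu> (norm x)"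
        by (rule mult_right_mono) simp
      ultimately show ?thesis using False by simp
    qed
  qed
  finally have "ennreal (h0 TYPE('a) \<nu> s') + ennreal (1/s\<^sup>2 - 1/s'\<^sup>2) * ennreal (mm TYPE('a) \<nu> s) \<le> ennreal (h0 TYPE('a) \<nu> s)"
    using HH_eq[OF assms(1)] MM_eq[OF assms(1)] assms s'p by simp
  moreover have "ennreal (h0 TYPE('a) \<nu> s' + (1/s\<^sup>2 - 1/s'\<^sup>2) * mm TYPE('a) \<nu> s) = ennreal (h0 TYPE('a) \<nu> s') + ennreal (1/s\<^sup>2 - 1/s'\<^sup>2) * ennreal (mm TYPE('a) \<nu> s)"
    using cpos h0_nonneg[of "TYPE('a)" \<nu> s'] mm_nonneg[of "TYPE('a)" \<nu> s]
    by (simp add: ennreal_mult' ennreal_plus)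
  ultimately have "ennreal (h0 TYPE('a) \<nu> s' + (1/s\<^sup>2 - 1/s'\<^sup>2) * mm TYPE('a) \<nu> s) \<le> ennreal (h0 TYPE('a) \<nu> s)"
    by simp
  then show ?thesis using h0_nonneg[of "TYPE('a)" \<nu> s] ennreal_le_iff by blast
qed

lemma mm_pos:
  assumes "levy_profile TYPE('a::euclidean_space) \<nu>" "s > 0"
  shows "mm TYPE('a) \<nu> s > 0"
proof (rule ccontr)
  assume "\<not> mm TYPE('a) \<nu> s > 0"
  then have m0: "mm TYPE('a) \<nu> s = 0" using mm_nonneg[of "TYPE('a)" \<nu> s] by simp
  have z: "\<nu> u = 0" if "u > 0" for u
  proof (cases "u \<le> s")
    case True
    have "mm TYPE('a) \<nu> u = 0" using mm_mono[OF assms(1) True] m0 mm_nonneg[of "TYPE('a)" \<nu> u] by simp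
    then show ?thesis using nu_le[OF assms(1) that] by simp
  next
    case False
    have "\<nu> s = 0" using nu_le[OF assms] m0 by simp
    then show ?thesis using levy_antit[OF assms(1)] False assms(2) unfolding antit_def
      by (metis le_zero_eq less_imp_le not_le)
  qed
  have "AE x in lborel. x \<noteq> (0::'a)" by (rule AE_lborel_singleton)
  then have "AE x in lborel. \<nu> (norm (x::'a)) = 0" by eventually_elim (simp add: z)
  then have "(\<integral>\<^sup>+ x. \<nu> (norm (x::'a)) \<partial>lborel) = (\<integral>\<^sup>+ x. 0 \<partial>lborel)"
    by (simp add: nn_integral_cong_AE)
  then show False using assms(1) unfolding levy_profile_def by simp
qed


lemma h0_tail:
  assumes "levy_profile TYPE('a::euclidean_space) \<nu>" "0 < R" "R \<le> r" "0 \<le> B"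
    and nb: "\<And>u. R \<le> u \<Longrightarrow> u < r \<Longrightarrow> \<nu> u \<le> ennreal B"
  shows "h0 TYPE('a) \<nu> R \<le> mm TYPE('a) \<nu> R / R\<^sup>2 + B * (unit_ball_vol (real DIM('a)) * r ^ DIM('a)) + h0 TYPE('a) \<nu> r"
proof -
  note an = levy_antit[OF assms(1)]
  have rp: "r > 0" using assms by simp
  let ?f1 = "\<lambda>x::'a. indicator {x. norm x < R} x * ennreal ((norm x)\<^sup>2) * \<nu> (norm x)"
  let ?f2 = "\<lambda>x::'a. ennreal B * indicator (ball 0 r) x"
  let ?f3 = "\<lambda>x::'a. ennreal (min 1 ((norm x)\<^sup>2 / r\<^sup>2)) * \<nu> (norm x)"
  have m1: "?f1 \<in> borel_measurable borel" using meas_MMint[OF an, of R] by simp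
  have m1': "(\<lambda>x. ennreal (1/R\<^sup>2) * ?f1 x) \<in> borel_measurable borel"
    by (rule borel_measurable_times_ennreal[OF borel_measurable_const m1])
  have m2: "?f2 \<in> borel_measurable borel" by (intro borel_measurable_times_ennreal borel_measurable_const borel_measurable_indicator) simp
  have m3: "?f3 \<in> borel_measurable borel" using meas_HHint[OF an, of r] by simp
  have "HH TYPE('a) \<nu> R \<le> (\<integral>\<^sup>+ x. ennreal (1/R\<^sup>2) * ?f1 x + ?f2 x + ?f3 x \<partial>lborel)"
    unfolding HH_def
  proof (rule nn_integral_mono)
    fix x :: 'a
    show "ennreal (min 1 ((norm x)\<^sup>2 / R\<^sup>2)) * \<nu> (norm x) \<le> ennreal (1/R\<^sup>2) * ?f1 x + ?f2 x + ?f3 x"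
    proof (cases "norm x < R")
      case True
      have "ennreal (min 1 ((norm x)\<^sup>2 / R\<^sup>2)) * \<nu> (norm x) \<le> ennreal (1/R\<^sup>2) * ?f1 x"
      proof -
        have "ennreal (min 1 ((norm x)\<^sup>2 / R\<^sup>2)) \<le> ennreal (1/R\<^sup>2) * ennreal ((norm x)\<^sup>2)"
          by (simp add: ennreal_mult'[symmetric] ennreal_leI)
        then show ?thesis using True by (simp add: mult_right_mono mult.assoc[symmetric])
      qed
      also have "\<dots> \<le> ennreal (1/R\<^sup>2) * ?f1 x + ?f2 x + ?f3 x" by (simp add: add.assoc)
      finally show ?thesis .
    next
      case False
      note F = False
      show ?thesis
      proof (cases "norm x < r")
        case True
        have "ennreal (min 1 ((norm x)\<^sup>2 / R\<^sup>2)) * \<nu> (norm x) \<le> 1 * \<nu> (norm x)"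
          by (intro mult_right_mono) (auto simp: ennreal_leI)
        also have "\<dots> \<le> ?f2 x" using nb[of "norm x"] F True by simp
        also have "\<dots> \<le> ennreal (1/R\<^sup>2) * ?f1 x + ?f2 x + ?f3 x" by simp
        finally show ?thesis .
      next
        case False
        have "r\<^sup>2 \<le> (norm x)\<^sup>2" using False rp by (intro power_mono) auto
        then have "min 1 ((norm x)\<^sup>2 / r\<^sup>2) = 1" using rp by simp
        then have "?f3 x = \<nu> (norm x)" by simp
        moreover have "ennreal (min 1 ((norm x)\<^sup>2 / R\<^sup>2)) * \<nu> (norm x) \<le> 1 * \<nu> (norm x)"
          by (intro mult_right_mono) (auto simp: ennreal_leI)
        ultimately show ?thesis by (simp add: add_increasing)
      qed
    qed
  qed
  also have "\<dots> = ennreal (1/R\<^sup>2) * MM TYPE('a) \<nu> R + ennreal B * emeasure lborel (ball (0::'a) r) + HH TYPE('a) \<nu> r"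
    unfolding HH_def MM_def
    using m1 m1' m2 m3
    by (simp add: nn_integral_add nn_integral_cmult nn_integral_cmult_indicator)
  also have "\<dots> = ennreal (mm TYPE('a) \<nu> R / R\<^sup>2 + B * (unit_ball_vol (real DIM('a)) * r ^ DIM('a)) + h0 TYPE('a) \<nu> r)"
    using MM_eq[OF assms(1)] HH_eq[OF assms(1) rp] rp assms mm_nonneg[of "TYPE('a)" \<nu> R] h0_nonneg[of "TYPE('a)" \<nu> r]
    by (simp add: emeasure_ball ennreal_mult'[symmetric] ennreal_plus[symmetric] del: ennreal_plus)
  finally have "ennreal (h0 TYPE('a) \<nu> R) \<le> ennreal (mm TYPE('a) \<nu> R / R\<^sup>2 + B * (unit_ball_vol (real DIM('a)) * r ^ DIM('a)) + h0 TYPE('a) \<nu> r)"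
    using HH_eq[OF assms(1) assms(2)] by simp
  moreover have "0 \<le> mm TYPE('a) \<nu> R / R\<^sup>2 + B * (unit_ball_vol (real DIM('a)) * r ^ DIM('a)) + h0 TYPE('a) \<nu> r"
    using mm_nonneg[of "TYPE('a)" \<nu> R] h0_nonneg[of "TYPE('a)" \<nu> r] assms rp by simp
  ultimately show ?thesis using ennreal_le_iff by blast
qed


lemma h0_big:
  assumes "levy_profile TYPE('a::euclidean_space) \<nu>"
  shows "\<exists>s>0. h0 TYPE('a) \<nu> s > v"
proof (rule ccontr)
  assume "\<not> (\<exists>s>0. h0 TYPE('a) \<nu> s > v)"
  then have le: "h0 TYPE('a) \<nu> s \<le> v" if "s > 0" for s using that by (meson not_less)
  note an = levy_antit[OF assms(1)]
  define f where "f k x = ennreal (min 1 ((real k + 1)\<^sup>2 * (norm (x::'a))\<^sup>2)) * \<nu> (norm x)" for k x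
  have fH: "integral\<^sup>N lborel (f k) = HH TYPE('a) \<nu> (1 / (real k + 1))" for k
    unfolding f_def HH_def by (simp add: power_divide mult.commute)
  have mf: "f k \<in> borel_measurable lborel" for k
  proof -
    have "(\<lambda>x::'a. ennreal (min 1 ((real k + 1)\<^sup>2 * (norm x)\<^sup>2))) \<in> borel_measurable borel" by measurable
    then show ?thesis unfolding f_def by (rule meas_prod[OF an])
  qed
  have inc: "incseq f"
  proof (intro incseq_SucI le_funI)
    fix k x
    have "(real k + 1)\<^sup>2 * (norm (x::'a))\<^sup>2 \<le> (real (Suc k) + 1)\<^sup>2 * (norm x)\<^sup>2"
      by (intro mult_right_mono power_mono) auto
    then show "f k x \<le> f (Suc k) x" unfolding f_def
      by (intro mult_right_mono ennreal_leI) auto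
  qed
  have "(\<integral>\<^sup>+ x. \<nu> (norm (x::'a)) \<partial>lborel) \<le> (\<integral>\<^sup>+ x. (SUP k. f k x) \<partial>lborel)"
  proof (rule nn_integral_mono_AE)
    have "AE x in lborel. x \<noteq> (0::'a)" by (rule AE_lborel_singleton)
    then show "AE x in lborel. \<nu> (norm (x::'a)) \<le> (SUP k. f k x)"
    proof eventually_elim
      case (elim x)
      then have "norm x > 0" by simp
      obtain k :: nat where k: "1 / norm x < real k" using reals_Archimedean2 by blast
      then have "1 < real k * norm x" using \<open>norm x > 0\<close> by (simp add: field_simps)
      also have "\<dots> \<le> (real k + 1) * norm x" using \<open>norm x > 0\<close> by simp
      finally have "1 \<le> ((real k + 1) * norm x)\<^sup>2"
        by (simp add: one_le_power)
      then have "f k x = \<nu> (norm x)" unfolding f_def by (simp add: power_mult_distrib)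
      then show ?case by (metis SUP_upper UNIV_I)
    qed
  qed
  also have "\<dots> = (SUP k. integral\<^sup>N lborel (f k))"
    by (rule nn_integral_monotone_convergence_SUP[OF inc mf])
  also have "\<dots> \<le> ennreal v"
  proof (rule SUP_least)
    fix k :: nat
    have p: "1 / (real k + 1) > 0" by simp
    show "integral\<^sup>N lborel (f k) \<le> ennreal v"
      unfolding fH HH_eq[OF assms p] using le[OF p] by (simp add: ennreal_leI)
  qed
  finally show False using assms unfolding levy_profile_def by (auto simp: top_unique)
qed

lemma h0_small:
  assumes "levy_profile TYPE('a::euclidean_space) \<nu>" "v > 0"
  shows "\<exists>s>0. h0 TYPE('a) \<nu> s < v"
proof -
  note an = levy_antit[OF assms(1)]
  define g where "g k x = ennreal (min 1 ((norm (x::'a))\<^sup>2 / (real k + 1)\<^sup>2)) * \<nu> (norm x)" for k x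
  have gH: "integral\<^sup>N lborel (g k) = HH TYPE('a) \<nu> (real k + 1)" for k
    unfolding g_def HH_def by simp
  have mg: "g k \<in> borel_measurable lborel" for k
    unfolding g_def by (rule meas_HHint[OF an])
  have dec: "g (Suc k) x \<le> g k x" for k x
  proof -
    have "(norm (x::'a))\<^sup>2 / (real (Suc k) + 1)\<^sup>2 \<le> (norm x)\<^sup>2 / (real k + 1)\<^sup>2"
      by (intro divide_left_mono power_mono) auto
    then show ?thesis unfolding g_def by (intro mult_right_mono ennreal_leI) auto
  qed
  have fin0: "integral\<^sup>N lborel (g 0) < \<infinity>"
    unfolding gH using HH_fin[OF assms(1), of 1] by simp
  have "(\<integral>\<^sup>+ x. (INF k. g k x) \<partial>lborel) = (INF k. integral\<^sup>N lborel (g k))"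
    by (rule nn_integral_monotone_convergence_INF_AE[where i=0]) (use mg fin0 dec in auto)
  moreover have "(\<integral>\<^sup>+ x. (INF k. g k x) \<partial>lborel) = (\<integral>\<^sup>+ (x::'a). 0 \<partial>lborel)"
  proof (rule nn_integral_cong_AE)
    have m1: "(\<lambda>x::'a. ennreal (min 1 ((norm x)\<^sup>2)) * \<nu> (norm x)) \<in> borel_measurable lborel"
    proof -
      have "(\<lambda>x::'a. ennreal (min 1 ((norm x)\<^sup>2))) \<in> borel_measurable borel" by measurable
      then show ?thesis by (rule meas_prod[OF an])
    qed
    have "AE x in lborel. ennreal (min 1 ((norm (x::'a))\<^sup>2)) * \<nu> (norm x) \<noteq> \<infinity>"
      by (rule nn_integral_noteq_infinite[OF m1]) (use assms(1) in \<open>auto simp: levy_profile_def\<close>)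
    moreover have "AE x in lborel. x \<noteq> (0::'a)" by (rule AE_lborel_singleton)
    ultimately show "AE x in lborel. (INF k. g k x) = 0"
    proof eventually_elim
      case (elim x)
      then have np: "norm x > 0" by simp
      then have "ennreal (min 1 ((norm x)\<^sup>2)) \<noteq> 0" by (simp add: min_def)
      then have "\<nu> (norm x) \<noteq> \<infinity>" using elim(1) by (auto simp: ennreal_mult_eq_top_iff)
      then obtain q where q: "\<nu> (norm x) = ennreal q" "q \<ge> 0" by (cases "\<nu> (norm x)") auto
      have "(INF k. g k x) \<le> 0"
      proof (rule ennreal_le_epsilon)
        fix e :: real assume e: "e > 0"
        obtain k :: nat where k: "(norm x)\<^sup>2 * q / e < real k" using reals_Archimedean2 by blast
        have k1: "real k + 1 \<le> (real k + 1)\<^sup>2" by (simp add: power2_eq_square)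
        have "(norm x)\<^sup>2 * q / e < (real k + 1)\<^sup>2" using k k1 by linarith
        then have "(norm x)\<^sup>2 * q < e * (real k + 1)\<^sup>2" using e by (simp add: field_simps)
        then have b: "(norm x)\<^sup>2 / (real k + 1)\<^sup>2 * q \<le> e" by (simp add: field_simps)
        have "min 1 ((norm x)\<^sup>2 / (real k + 1)\<^sup>2) * q \<le> (norm x)\<^sup>2 / (real k + 1)\<^sup>2 * q"
          using q by (intro mult_right_mono) auto
        then have "g k x \<le> ennreal e" unfolding g_def q using b q
          by (simp add: ennreal_mult'[symmetric] ennreal_leI)
        then show "(INF k. g k x) \<le> 0 + ennreal e" by (simp add: INF_lower2)
      qed
      then show ?case by simp
    qed
  qed
  ultimately have "(INF k. integral\<^sup>N lborel (g k)) = 0" by simp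
  then have "(INF k. integral\<^sup>N lborel (g k)) < ennreal v" using assms by simp
  then obtain k where "integral\<^sup>N lborel (g k) < ennreal v" by (auto simp: INF_less_iff)
  then have "h0 TYPE('a) \<nu> (real k + 1) < v"
    unfolding gH using HH_eq[OF assms(1), of "real k + 1"] by (simp add: ennreal_less_iff[OF h0_nonneg])
  then show ?thesis by (intro exI[of _ "real k + 1"]) auto
qed


lemma h0_strict_mono:
  assumes "levy_profile TYPE('a::euclidean_space) \<nu>" "0 < s" "s < s'"
  shows "h0 TYPE('a) \<nu> s' < h0 TYPE('a) \<nu> s"
proof -
  have "s\<^sup>2 < s'\<^sup>2" using assms by (intro power_strict_mono) auto
  then have "1/s\<^sup>2 - 1/s'\<^sup>2 > 0" using assms by (simp add: field_simps)
  moreover have "mm TYPE('a) \<nu> s > 0" by (rule mm_pos[OF assms(1,2)])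
  ultimately have "(1/s\<^sup>2 - 1/s'\<^sup>2) * mm TYPE('a) \<nu> s > 0" by simp
  then show ?thesis using h0_strict[OF assms] by linarith
qed

lemma h0_isCont:
  assumes "levy_profile TYPE('a::euclidean_space) \<nu>" "r0 > 0"
  shows "isCont (h0 TYPE('a) \<nu>) r0"
proof -
  let ?h = "h0 TYPE('a) \<nu>"
  let ?l = "\<lambda>r. min 1 ((r0/r)\<^sup>2) * ?h r0"
  let ?u = "\<lambda>r. max 1 ((r0/r)\<^sup>2) * ?h r0"
  have ev: "eventually (\<lambda>r. r > 0) (at r0)"
    using order_tendstoD(1)[OF tendsto_ident_at assms(2)] by simp
  have b: "?l r \<le> ?h r \<and> ?h r \<le> ?u r" if "r > 0" for r
  proof (cases "r0 \<le> r")
    case True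
    have a1: "?h r \<le> ?h r0" by (rule h0_anti[OF assms(1,2) True])
    have a2: "r0\<^sup>2 * ?h r0 \<le> r\<^sup>2 * ?h r" by (rule h0_sq[OF assms(1,2) True])
    have "(r0/r)\<^sup>2 \<le> 1" using True that assms by (simp add: power_le_one)
    then have "?l r = (r0/r)\<^sup>2 * ?h r0" by simp
    also have "\<dots> \<le> ?h r" using a2 that by (simp add: power_divide field_simps)
    finally show ?thesis using a1 h0_nonneg[of "TYPE('a)" \<nu> r0]
      by (simp add: mult_le_cancel_right1 order_trans[OF a1])
  next
    case False
    then have F: "r \<le> r0" by simp
    have a1: "?h r0 \<le> ?h r" by (rule h0_anti[OF assms(1) that F])
    have a2: "r\<^sup>2 * ?h r \<le> r0\<^sup>2 * ?h r0" by (rule h0_sq[OF assms(1) that F])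
    have "1 \<le> (r0/r)\<^sup>2" using F that by (simp add: one_le_power)
    then have "?u r = (r0/r)\<^sup>2 * ?h r0" by simp
    moreover have "?h r \<le> (r0/r)\<^sup>2 * ?h r0" using a2 that by (simp add: power_divide field_simps)
    moreover have "?l r = ?h r0" using \<open>1 \<le> (r0/r)\<^sup>2\<close> by simp
    ultimately show ?thesis using a1 by linarith
  qed
  have c: "((\<lambda>r. (r0/r)\<^sup>2) \<longlongrightarrow> 1) (at r0)"
  proof -
    have "((\<lambda>r. (r0/r)\<^sup>2) \<longlongrightarrow> (r0/r0)\<^sup>2) (at r0)"
      using assms(2) by (intro tendsto_intros) auto
    then show ?thesis using assms(2) by simp
  qed
  have l: "(?l \<longlongrightarrow> min 1 1 * ?h r0) (at r0)"
    by (rule tendsto_mult_right[OF tendsto_min[OF tendsto_const c]])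
  have u: "(?u \<longlongrightarrow> max 1 1 * ?h r0) (at r0)"
    by (rule tendsto_mult_right[OF tendsto_max[OF tendsto_const c]])
  have e1: "eventually (\<lambda>r. ?l r \<le> ?h r) (at r0)" by (rule eventually_mono[OF ev]) (use b in blast)
  have e2: "eventually (\<lambda>r. ?h r \<le> ?u r) (at r0)" by (rule eventually_mono[OF ev]) (use b in blast)
  have "(?h \<longlongrightarrow> ?h r0) (at r0)"
    using tendsto_sandwich[OF e1 e2] l u by simp
  then show ?thesis by (simp add: isCont_def)
qed



lemma h0_inv_prop:
  assumes "levy_profile TYPE('a::euclidean_space) \<nu>" "v > 0"
  shows "h0_inv TYPE('a) \<nu> v > 0 \<and> h0 TYPE('a) \<nu> (h0_inv TYPE('a) \<nu> v) = v"
proof -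
  obtain a where a: "a > 0" "h0 TYPE('a) \<nu> a > v" using h0_big[OF assms(1)] by blast
  obtain b where b: "b > 0" "h0 TYPE('a) \<nu> b < v" using h0_small[OF assms] by blast
  have ab: "a \<le> b"
  proof (rule ccontr)
    assume "\<not> a \<le> b"
    then have "h0 TYPE('a) \<nu> a \<le> h0 TYPE('a) \<nu> b" using h0_anti[OF assms(1) b(1)] by simp
    then show False using a b by simp
  qed
  have "continuous_on {a..b} (h0 TYPE('a) \<nu>)"
    using a(1) by (intro continuous_at_imp_continuous_on ballI h0_isCont[OF assms(1)]) auto
  then obtain x where x: "a \<le> x" "x \<le> b" "h0 TYPE('a) \<nu> x = v"
    using IVT2'[of "h0 TYPE('a) \<nu>" b v a] a b ab by auto
  have ex: "\<exists>!r. 0 < r \<and> h0 TYPE('a) \<nu> r = v"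
  proof (rule ex1I[of _ x])
    show "0 < x \<and> h0 TYPE('a) \<nu> x = v" using x a by simp
  next
    fix y assume y: "0 < y \<and> h0 TYPE('a) \<nu> y = v"
    show "y = x"
    proof (rule ccontr)
      assume "y \<noteq> x"
      then consider "y < x" | "x < y" by linarith
      then show False
      proof cases
        case 1 then show False using h0_strict_mono[OF assms(1) _ 1] y x by simp
      next
        case 2 then show False using h0_strict_mono[OF assms(1) _ 2] y x a by simp
      qed
    qed
  qed
  show ?thesis unfolding h0_inv_def using theI'[OF ex] by blast
qed


lemma K0_mm: "K0 T \<nu> r = mm T \<nu> r / r\<^sup>2"
  unfolding K0_def mm_def MM_def ..

definition C2 :: "nat \<Rightarrow> real \<Rightarrow> real" where
  "C2 d a = (2*a) ^ (d + 2) * (1 + unit_ball_vol (real d) / kap d)"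

lemma alg: "(k::real) > 0 \<Longrightarrow> X*(P*q) + (P*q/k)*(w*X) = X*q*(P*(1 + w/k))"
  by (simp add: field_simps)

lemma key:
  assumes lev: "levy_profile TYPE('a::euclidean_space) \<nu>" and a: "a \<ge> 1" and t: "t > 0"
    and rho: "0 < \<rho>" "\<rho> \<le> 2 * a * h0_inv TYPE('a) \<nu> (3/t)"
  shows "2 * (1 / h0_inv TYPE('a) \<nu> (1/t)) ^ DIM('a) \<le> C2 DIM('a) a * (t * mm TYPE('a) \<nu> \<rho> / \<rho> ^ (DIM('a) + 2))"
proof -
  let ?d = "DIM('a)" let ?D = "DIM('a) + 2"
  let ?r = "h0_inv TYPE('a) \<nu> (1/t)" let ?R = "h0_inv TYPE('a) \<nu> (3/t)"
  let ?w = "unit_ball_vol (real ?d)" let ?k = "kap ?d"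
  let ?q = "mm TYPE('a) \<nu> \<rho> / \<rho> ^ ?D"
  have r: "?r > 0" "h0 TYPE('a) \<nu> ?r = 1/t" using h0_inv_prop[OF lev, of "1/t"] t by auto
  have R: "?R > 0" "h0 TYPE('a) \<nu> ?R = 3/t" using h0_inv_prop[OF lev, of "3/t"] t by auto
  have Rr: "?R \<le> ?r"
  proof (rule ccontr)
    assume "\<not> ?R \<le> ?r"
    then have "h0 TYPE('a) \<nu> ?R \<le> h0 TYPE('a) \<nu> ?r" using h0_anti[OF lev r(1)] by simp
    then show False using r R t by (simp add: divide_le_cancel)
  qed
  have k: "?k > 0" by (rule kap_pos) simp
  have w: "?w > 0" by simp
  have q: "?q \<ge> 0" using mm_nonneg[of "TYPE('a)" \<nu> \<rho>] rho by simp
  have a2: "2 * a \<ge> 1" using a by simp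
  have cmp: "mm TYPE('a) \<nu> u / u ^ ?D \<le> (2*a) ^ ?D * ?q" if "u \<ge> ?R" for u
  proof -
    have "2*a*?R \<le> 2*a*u" using that a by (intro mult_left_mono) auto
    then have "\<rho> \<le> 2*a*u" using rho by linarith
    then have "u \<ge> \<rho> / (2*a)" using a by (simp add: field_simps)
    then show ?thesis using mm_compare[OF lev a2 rho(1)] by simp
  qed
  define B where "B = (2*a) ^ ?D * ?q / ?k"
  have B0: "B \<ge> 0" unfolding B_def by (rule divide_nonneg_pos[OF mult_nonneg_nonneg[OF _ q] k]) (use a in simp)
  have nb: "\<nu> u \<le> ennreal B" if "?R \<le> u" "u < ?r" for u
  proof -
    have up: "u > 0" using that R by simp
    have "\<nu> u \<le> ennreal (mm TYPE('a) \<nu> u / (?k * u ^ ?D))" by (rule nu_le[OF lev up])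
    also have "mm TYPE('a) \<nu> u / (?k * u ^ ?D) = (mm TYPE('a) \<nu> u / u ^ ?D) / ?k" by simp
    also have "\<dots> \<le> B" unfolding B_def by (rule divide_right_mono[OF cmp[OF that(1)]]) (use k in simp)
    finally show ?thesis by (simp add: ennreal_leI)
  qed
  have tail: "3/t \<le> mm TYPE('a) \<nu> ?R / ?R\<^sup>2 + B * (?w * ?r ^ ?d) + 1/t"
    using h0_tail[OF lev R(1) Rr B0 nb] R r by simp
  have t1: "mm TYPE('a) \<nu> ?R / ?R\<^sup>2 \<le> ?r ^ ?d * ((2*a) ^ ?D * ?q)"
  proof -
    have "mm TYPE('a) \<nu> ?R / ?R\<^sup>2 = ?R ^ ?d * (mm TYPE('a) \<nu> ?R / ?R ^ ?D)"
      using R by (simp add: power_add power2_eq_square field_simps)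
    also have "\<dots> \<le> ?r ^ ?d * ((2*a) ^ ?D * ?q)"
      using cmp[of ?R] R Rr q a mm_nonneg[of "TYPE('a)" \<nu> ?R]
      by (intro mult_mono power_mono) auto
    finally show ?thesis .
  qed
  have "2/t \<le> ?r ^ ?d * ((2*a) ^ ?D * ?q) + B * (?w * ?r ^ ?d)"
    using tail t1 by (simp add: field_simps)
  also have "\<dots> = ?r ^ ?d * ?q * C2 ?d a"
    unfolding B_def C2_def by (rule alg[OF k])
  finally have m: "2/t \<le> ?r ^ ?d * ?q * C2 ?d a" .
  have "2 * (1/?r) ^ ?d = (2/t) * t / ?r ^ ?d" using t r by (simp add: power_one_over)
  also have "\<dots> \<le> (?r ^ ?d * ?q * C2 ?d a) * t / ?r ^ ?d"
    using m t r by (intro divide_right_mono mult_right_mono) auto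
  also have "\<dots> = C2 ?d a * (t * ?q)" using r by (simp add: field_simps)
  finally show ?thesis by (simp add: mult.assoc)
qed


lemma C2_ge: "a \<ge> 1 \<Longrightarrow> C2 d a \<ge> 2"
proof -
  assume a: "a \<ge> 1"
  have k: "kap d \<ge> 0" unfolding kap_def by (simp add: power_le_one)
  have "(2::real) \<le> 2 ^ (d+2)" by (metis le_add2 one_le_numeral power_increasing power_one_right trans_le_add2)
  also have "\<dots> \<le> (2*a) ^ (d+2)" using a by (intro power_mono) auto
  also have "\<dots> \<le> (2*a) ^ (d+2) * (1 + unit_ball_vol (real d) / kap d)"
  proof -
    have "0 \<le> unit_ball_vol (real d) / kap d" using k by simp
    then have "(2*a) ^ (d+2) * 1 \<le> (2*a) ^ (d+2) * (1 + unit_ball_vol (real d) / kap d)"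
      using a by (intro mult_left_mono) auto
    then show ?thesis by simp
  qed
  finally show ?thesis unfolding C2_def .
qed

theorem proposition6p6:
  fixes a :: real
  assumes "a \<ge> 1"
  shows "\<exists>c::real. \<forall>\<nu>. levy_profile TYPE('a::euclidean_space) \<nu> \<longrightarrow>
           (\<forall>t>0. \<forall>x z :: 'a.
              norm z \<le> max (a * h0_inv TYPE('a) \<nu> (3/t)) (norm x / 2) \<longrightarrow>
              rho \<nu> t (x + z) \<le> c * rho \<nu> t x)"
proof (intro exI[of _ "2 ^ (DIM('a) + 2) + C2 DIM('a) a"] allI impI)
  fix \<nu> :: "real \<Rightarrow> ennreal" and t :: real and x z :: 'a
  assume lev: "levy_profile TYPE('a) \<nu>" and t: "t > 0"
    and zb: "norm z \<le> max (a * h0_inv TYPE('a) \<nu> (3/t)) (norm x / 2)"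
  let ?d = "DIM('a)" let ?D = "DIM('a) + 2"
  let ?r = "h0_inv TYPE('a) \<nu> (1/t)" let ?R = "h0_inv TYPE('a) \<nu> (3/t)"
  let ?A = "(1 / ?r) ^ ?d"
  let ?Q = "\<lambda>s. t * mm TYPE('a) \<nu> s / s ^ ?D"
  let ?c = "2 ^ (DIM('a) + 2) + C2 DIM('a) a"
  have r: "?r > 0" using h0_inv_prop[OF lev, of "1/t"] t by auto
  have A0: "?A \<ge> 0" using r by simp
  have C2: "C2 ?d a \<ge> 2" by (rule C2_ge[OF assms])
  have p2: "(1::real) \<le> 2 ^ ?D" by (rule one_le_power) simp
  have c1: "?c \<ge> 1" using C2 p2 by linarith
  have rle: "rho \<nu> t y \<le> ?A" for y :: 'a
    unfolding rho_def by simp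
  have rnz: "rho \<nu> t y = min ?A (?Q (norm y))" if "y \<noteq> 0" for y :: 'a
  proof -
    have "t * K0 TYPE('a) \<nu> (norm y) / norm y ^ ?d = ?Q (norm y)"
      unfolding K0_mm using that by (simp add: power_add power2_eq_square field_simps)
    then show ?thesis unfolding rho_def using that by simp
  qed
  have Q0: "?Q s \<ge> 0" if "s > 0" for s
    using mm_nonneg[of "TYPE('a)" \<nu> s] t that by simp
  show "rho \<nu> t (x + z) \<le> ?c * rho \<nu> t x"
  proof (cases "x = 0")
    case True
    have "rho \<nu> t x = ?A" using True unfolding rho_def by simp
    then show ?thesis using rle[of "x+z"] c1 A0
      by (metis mult_le_cancel_right1 order_trans not_le mult_1)
  next
    case False
    let ?p = "norm x"
    have pp: "?p > 0" using False by simp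
    have rx: "rho \<nu> t x = min ?A (?Q ?p)" by (rule rnz[OF False])
    have rx0: "rho \<nu> t x \<ge> 0" unfolding rx using A0 Q0[OF pp] by simp
    show ?thesis
    proof (cases "norm z \<le> ?p / 2")
      case True
      let ?p' = "norm (x + z)"
      have "?p' \<ge> ?p - norm z" by (metis norm_diff_ineq add_diff_cancel_right' norm_minus_commute diff_minus_eq_add)
      then have p': "?p' \<ge> ?p / 2" using True by linarith
      then have xz: "x + z \<noteq> 0" using pp by auto
      have cmp: "mm TYPE('a) \<nu> ?p' / ?p' ^ ?D \<le> 2 ^ ?D * mm TYPE('a) \<nu> ?p / ?p ^ ?D"
        by (rule mm_compare[OF lev _ pp p']) simp
      have "?Q ?p' \<le> 2 ^ ?D * ?Q ?p"
        using mult_left_mono[OF cmp, of t] t by (simp add: mult_ac)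
      then have "rho \<nu> t (x + z) \<le> min ?A (2 ^ ?D * ?Q ?p)"
        unfolding rnz[OF xz] by simp
      also have "\<dots> \<le> 2 ^ ?D * min ?A (?Q ?p)"
        using A0 p2 by (simp add: min_mult_distrib_left min_def) (smt (verit) mult_le_cancel_right1)
      also have "\<dots> \<le> ?c * rho \<nu> t x" unfolding rx[symmetric]
        using rx0 C2 by (intro mult_right_mono) auto
      finally show ?thesis .
    next
      case False
      then have "norm z \<le> a * ?R" using zb by simp
      then have pR: "?p \<le> 2 * a * ?R" using False by linarith
      have k: "2 * ?A \<le> C2 ?d a * ?Q ?p" using key[OF lev assms t pp pR] by simp
      have "?A \<le> ?c * min ?A (?Q ?p)"
      proof (cases "?A \<le> ?Q ?p")
        case True
        have "1 * ?A \<le> ?c * ?A" using c1 A0 by (intro mult_right_mono) auto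
        then show ?thesis using True by (simp add: min_def)
      next
        case False
        then have "?A \<le> C2 ?d a * ?Q ?p" using k A0 by linarith
        also have "\<dots> \<le> ?c * ?Q ?p" using Q0[OF pp] by (intro mult_right_mono) auto
        finally show ?thesis using False by (simp add: min_def)
      qed
      then show ?thesis using rle[of "x+z"] rx by simp
    qed
  qed
qed

end
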